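(* Let $S=(X,X_0,X_S,U,\rightarrow,Y,H)$ be a metric system with metric $\mathbf{d}$ on $Y$, let $\delta\geq 0$, and let $S_C=(X_C,X_{C0},U,\rightarrow_C)$ be its $\delta$-approximate current-state estimator. Then $S$ is $\delta$-approximate current-state opaque if and only if $q\not\subseteq X_S$ for all $(x,q)\in X_C$.
   Context: A system is a tuple $S=(X,X_0,X_S,U,\rightarrow,Y,H)$ with state set $X$, initial states $X_0\subseteq X$, secret states $X_S\subseteq X$, inputs $U$, transition relation $\rightarrow\subseteq X\times U\times X$ (write $x\xrightarrow{u}x'$), outputs $Y$, output map $H:X\to Y$; it is metric if $Y$ has a metric $\mathbf{d}$. $S$ is $\delta$-approximate current-state opaque if for every $x_0\in X_0$ and every finite run $x_0\xrightarrow{u_1}x_1\cdots\xrightarrow{u_n}x_n$ with $x_n\in X_S$ there exist $x_0'\in X_0$ and a finite run $x_0'\xrightarrow{u_1'}x_1'\cdots\xrightarrow{u_n'}x_n'$ (inputs arbitrary) with $x_n'\in X\setminus X_S$ and $\max_{0\le i\le n}\mathbf{d}(H(x_i),H(x_i'))\leq\delta$. Let $\mathbf{Post}_u(x)=\{x':x\xrightarrow{u}x'\}$, $\mathbf{Post}_u(q)=\bigcup_{x\in q}\mathbf{Post}_u(x)$. The $\delta$-approximate current-state estimator is $S_C=(X_C,X_{C0},U,\rightarrow_C)$ with $X_{C0}=\{(x,q)\in X_0\times 2^{X_0}: q=\{x'\in X_0:\mathbf{d}(H(x),H(x'))\leq\delta\}\}$, and $(x,q)\xrightarrow{u}_C(x',q')$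 iff $(x,u,x')\in\rightarrow$ and $q'=\bigcup_{\hat u\in U}\mathbf{Post}_{\hat u}(q)\cap\{x''\in X:\mathbf{d}(H(x'),H(x''))\leq\delta\}$; $X_C$ is the set of states reachable from $X_{C0}$. *)

theory Defs
  imports Complex_Main
begin

text \<open>A system S = (X, X0, XS, U, T, Y, H); here the output set Y is the whole
  metric-space type 'y (with metric dist), and T is the transition relation.\<close>

definition is_system ::
  "'x set \<Rightarrow> 'x set \<Rightarrow> 'x set \<Rightarrow> 'u set \<Rightarrow> ('x \<times> 'u \<times> 'x) set \<Rightarrow> bool" where
  "is_system X X0 XS U T \<longleftrightarrow> X0 \<subseteq> X \<and> XS \<subseteq> X \<and> T \<subseteq> X \<times> U \<times> X"

text \<open>A finite run x0 -u1-> x1 ... -un-> xn of length n (states xs 0..n, inputs us 1..n).\<close>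
definition is_run :: "('x \<times> 'u \<times> 'x) set \<Rightarrow> (nat \<Rightarrow> 'x) \<Rightarrow> (nat \<Rightarrow> 'u) \<Rightarrow> nat \<Rightarrow> bool" where
  "is_run T xs us n \<longleftrightarrow> (\<forall>i<n. (xs i, us (Suc i), xs (Suc i)) \<in> T)"

definition approx_cso ::
  "'x set \<Rightarrow> 'x set \<Rightarrow> 'x set \<Rightarrow> ('x \<times> 'u \<times> 'x) set \<Rightarrow> ('x \<Rightarrow> 'y::metric_space) \<Rightarrow> real \<Rightarrow> bool" where
  "approx_cso X X0 XS T H \<delta> \<longleftrightarrow>
     (\<forall>n xs us. xs 0 \<in> X0 \<and> is_run T xs us n \<and> xs n \<in> XS \<longrightarrow>
        (\<exists>xs' us'. xs' 0 \<in> X0 \<and> is_run T xs' us' n \<and> xs' n \<in> X - XS \<and>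
           (\<forall>i\<le>n. dist (H (xs i)) (H (xs' i)) \<le> \<delta>)))"

definition Post :: "('x \<times> 'u \<times> 'x) set \<Rightarrow> 'u \<Rightarrow> 'x set \<Rightarrow> 'x set" where
  "Post T u q = {x'. \<exists>x\<in>q. (x, u, x') \<in> T}"

definition est_init :: "'x set \<Rightarrow> ('x \<Rightarrow> 'y::metric_space) \<Rightarrow> real \<Rightarrow> ('x \<times> 'x set) set" where
  "est_init X0 H \<delta> = {(x, q). x \<in> X0 \<and> q = {x' \<in> X0. dist (H x) (H x') \<le> \<delta>}}"

definition est_step ::
  "'x set \<Rightarrow> 'u set \<Rightarrow> ('x \<times> 'u \<times> 'x) set \<Rightarrow> ('x \<Rightarrow> 'y::metric_space) \<Rightarrow> real \<Rightarrow>
   'x \<times> 'x set \<Rightarrow> 'u \<Rightarrow> 'x \<times> 'x set \<Rightarrow> bool" where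
  "est_step X U T H \<delta> s u s' \<longleftrightarrow>
     (fst s, u, fst s') \<in> T \<and>
     snd s' = (\<Union>u'\<in>U. Post T u' (snd s)) \<inter> {x'' \<in> X. dist (H (fst s')) (H x'') \<le> \<delta>}"

inductive_set est_reach ::
  "'x set \<Rightarrow> 'x set \<Rightarrow> 'u set \<Rightarrow> ('x \<times> 'u \<times> 'x) set \<Rightarrow> ('x \<Rightarrow> 'y::metric_space) \<Rightarrow> real \<Rightarrow>
   ('x \<times> 'x set) set"
  for X X0 U T H \<delta> where
  init: "s \<in> est_init X0 H \<delta> \<Longrightarrow> s \<in> est_reach X X0 U T H \<delta>"
| step: "s \<in> est_reach X X0 U T H \<delta> \<Longrightarrow> est_step X U T H \<delta> s u s' \<Longrightarrow> s' \<in> est_reach X X0 U T H \<delta>"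

end

theory Submission
  imports Defs
begin

definition QQ :: "'x set \<Rightarrow> ('x \<times> 'u \<times> 'x) set \<Rightarrow> ('x \<Rightarrow> 'y::metric_space) \<Rightarrow> real \<Rightarrow> (nat \<Rightarrow> 'x) \<Rightarrow> nat \<Rightarrow> 'x set" where
  "QQ X0 T H \<delta> xs n = {x'. \<exists>xs' us'. xs' 0 \<in> X0 \<and> is_run T xs' us' n \<and> xs' n = x' \<and>
      (\<forall>i\<le>n. dist (H (xs i)) (H (xs' i)) \<le> \<delta>)}"

lemma QQ_cong: "(\<And>i. i \<le> n \<Longrightarrow> xs i = ys i) \<Longrightarrow> QQ X0 T H \<delta> xs n = QQ X0 T H \<delta> ys n"
  unfolding QQ_def by auto

lemma QQ_0: "QQ X0 T H \<delta> xs 0 = {x' \<in> X0. dist (H (xs 0)) (H x') \<le> \<delta>}"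
proof
  show "QQ X0 T H \<delta> xs 0 \<subseteq> {x' \<in> X0. dist (H (xs 0)) (H x') \<le> \<delta>}"
    unfolding QQ_def by auto
  show "{x' \<in> X0. dist (H (xs 0)) (H x') \<le> \<delta>} \<subseteq> QQ X0 T H \<delta> xs 0"
  proof
    fix x' assume "x' \<in> {x' \<in> X0. dist (H (xs 0)) (H x') \<le> \<delta>}"
    then show "x' \<in> QQ X0 T H \<delta> xs 0" unfolding QQ_def is_run_def
      by (intro CollectI exI[of _ "\<lambda>_. x'"]) auto
  qed
qed

lemma is_run_Suc: "is_run T xs us (Suc n) \<longleftrightarrow> is_run T xs us n \<and> (xs n, us (Suc n), xs (Suc n)) \<in> T"
  unfolding is_run_def using less_Suc_eq by auto

lemma is_run_upd: "is_run T xs us n \<Longrightarrow> (xs n, u, x) \<in> T \<Longrightarrow>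
   is_run T (xs(Suc n := x)) (us(Suc n := u)) (Suc n)"
  unfolding is_run_def by (auto simp: less_Suc_eq)

lemma QQ_Suc:
  assumes sys: "T \<subseteq> X \<times> U \<times> X"
  shows "QQ X0 T H \<delta> xs (Suc n) =
    (\<Union>u'\<in>U. Post T u' (QQ X0 T H \<delta> xs n)) \<inter> {x'' \<in> X. dist (H (xs (Suc n))) (H x'') \<le> \<delta>}"
proof
  show "QQ X0 T H \<delta> xs (Suc n) \<subseteq> (\<Union>u'\<in>U. Post T u' (QQ X0 T H \<delta> xs n)) \<inter> {x'' \<in> X. dist (H (xs (Suc n))) (H x'') \<le> \<delta>}"
  proof
    fix x' assume "x' \<in> QQ X0 T H \<delta> xs (Suc n)"
    then obtain xs' us' where a: "xs' 0 \<in> X0" "is_run T xs' us' (Suc n)" "xs' (Suc n) = x'"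
      "\<forall>i\<le>Suc n. dist (H (xs i)) (H (xs' i)) \<le> \<delta>" unfolding QQ_def by blast
    have r: "is_run T xs' us' n" and t: "(xs' n, us' (Suc n), xs' (Suc n)) \<in> T"
      using a(2) is_run_Suc by blast+
    have "xs' n \<in> QQ X0 T H \<delta> xs n" unfolding QQ_def using a r by auto
    moreover have "us' (Suc n) \<in> U" "x' \<in> X" using t sys a(3) by auto
    ultimately show "x' \<in> (\<Union>u'\<in>U. Post T u' (QQ X0 T H \<delta> xs n)) \<inter> {x'' \<in> X. dist (H (xs (Suc n))) (H x'') \<le> \<delta>}"
      unfolding Post_def using t a by auto
  qed
  show "(\<Union>u'\<in>U. Post T u' (QQ X0 T H \<delta> xs n)) \<inter> {x'' \<in> X. dist (H (xs (Suc n))) (H x'') \<le> \<delta>} \<subseteq> QQ X0 T H \<delta> xs (Suc n)"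
  proof
    fix x'' assume "x'' \<in> (\<Union>u'\<in>U. Post T u' (QQ X0 T H \<delta> xs n)) \<inter> {x'' \<in> X. dist (H (xs (Suc n))) (H x'') \<le> \<delta>}"
    then obtain u x where u: "x \<in> QQ X0 T H \<delta> xs n" "(x, u, x'') \<in> T" "dist (H (xs (Suc n))) (H x'') \<le> \<delta>"
      unfolding Post_def by auto
    then obtain xs' us' where a: "xs' 0 \<in> X0" "is_run T xs' us' n" "xs' n = x"
      "\<forall>i\<le>n. dist (H (xs i)) (H (xs' i)) \<le> \<delta>" unfolding QQ_def by blast
    have "is_run T (xs'(Suc n := x'')) (us'(Suc n := u)) (Suc n)"
      using is_run_upd[OF a(2)] a(3) u(2) by auto
    moreover have "\<forall>i\<le>Suc n. dist (H (xs i)) (H ((xs'(Suc n := x'')) i)) \<le> \<delta>"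
      using a(4) u(3) by (auto simp: le_Suc_eq)
    ultimately show "x'' \<in> QQ X0 T H \<delta> xs (Suc n)" unfolding QQ_def using a(1)
      by (intro CollectI exI[of _ "xs'(Suc n := x'')"] exI[of _ "us'(Suc n := u)"]) auto
  qed
qed

lemma reach_run:
  assumes sys: "T \<subseteq> X \<times> U \<times> X"
  shows "s \<in> est_reach X X0 U T H \<delta> \<Longrightarrow>
    \<exists>n xs us. xs 0 \<in> X0 \<and> is_run T xs us n \<and> xs n = fst s \<and> snd s = QQ X0 T H \<delta> xs n"
proof (induction rule: est_reach.induct)
  case (init s)
  then show ?case unfolding est_init_def
    by (intro exI[of _ 0] exI[of _ "\<lambda>_. fst s"]) (auto simp: QQ_0 is_run_def)
next
  case (step s u s')
  have st: "est_step X U T H \<delta> s u s'" by fact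
  from step.IH obtain n xs us where a: "xs 0 \<in> X0" "is_run T xs us n" "xs n = fst s" "snd s = QQ X0 T H \<delta> xs n"
    by blast
  let ?xs = "xs(Suc n := fst s')" and ?us = "us(Suc n := u)"
  have r: "is_run T ?xs ?us (Suc n)" using is_run_upd[OF a(2)] a(3) st unfolding est_step_def by auto
  have "QQ X0 T H \<delta> ?xs n = QQ X0 T H \<delta> xs n" by (rule QQ_cong) auto
  then have "snd s' = QQ X0 T H \<delta> ?xs (Suc n)"
    using st a(4) unfolding est_step_def QQ_Suc[OF sys] by simp
  moreover have "?xs (Suc n) = fst s'" by simp
  moreover have "?xs 0 \<in> X0" using a(1) by simp
  ultimately show ?case using r by blast
qed

lemma run_reach:
  assumes sys: "T \<subseteq> X \<times> U \<times> X"
  shows "xs 0 \<in> X0 \<Longrightarrow> is_run T xs us n \<Longrightarrow> (xs n, QQ X0 T H \<delta> xs n) \<in> est_reach X X0 U T H \<delta>"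
proof (induction n)
  case 0
  then show ?case by (intro est_reach.init) (auto simp: est_init_def QQ_0)
next
  case (Suc n)
  then have ih: "(xs n, QQ X0 T H \<delta> xs n) \<in> est_reach X X0 U T H \<delta>"
    and t: "(xs n, us (Suc n), xs (Suc n)) \<in> T" using is_run_Suc by blast+
  show ?case
    by (rule est_reach.step[OF ih, of "us (Suc n)"])
       (simp add: est_step_def t QQ_Suc[OF sys])
qed

theorem mainTheorem3:
  fixes X X0 XS :: "'x set" and U :: "'u set" and T :: "('x \<times> 'u \<times> 'x) set"
    and H :: "'x \<Rightarrow> 'y::metric_space" and \<delta> :: real
  assumes "is_system X X0 XS U T"
    and "\<delta> \<ge> 0"
  shows "approx_cso X X0 XS T H \<delta> \<longleftrightarrow>
         (\<forall>(x, q) \<in> est_reach X X0 U T H \<delta>. \<not> q \<subseteq> XS)"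
proof
  have sys: "T \<subseteq> X \<times> U \<times> X" and x0: "X0 \<subseteq> X" using assms(1) unfolding is_system_def by auto
  have inX: "xs 0 \<in> X0 \<Longrightarrow> is_run T xs us n \<Longrightarrow> xs n \<in> X" for xs us n
    using sys x0 unfolding is_run_def by (cases n) auto
  assume op: "approx_cso X X0 XS T H \<delta>"
  show "\<forall>(x, q) \<in> est_reach X X0 U T H \<delta>. \<not> q \<subseteq> XS"
  proof (intro ballI, clarify)
    fix x q assume "(x, q) \<in> est_reach X X0 U T H \<delta>" and sub: "q \<subseteq> XS"
    then obtain n xs us where a: "xs 0 \<in> X0" "is_run T xs us n" "xs n = x" "q = QQ X0 T H \<delta> xs n"
      using reach_run[OF sys] by fastforce
    have self: "x \<in> q" unfolding a(4) QQ_def using a assms(2) by auto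
    then have "x \<in> XS" using sub by auto
    then obtain xs' us' where b: "xs' 0 \<in> X0" "is_run T xs' us' n" "xs' n \<in> X - XS"
      "\<forall>i\<le>n. dist (H (xs i)) (H (xs' i)) \<le> \<delta>"
      using op a unfolding approx_cso_def by blast
    have "xs' n \<in> q" unfolding a(4) QQ_def using b by auto
    then show False using sub b(3) by auto
  qed
next
  have sys: "T \<subseteq> X \<times> U \<times> X" and x0: "X0 \<subseteq> X" using assms(1) unfolding is_system_def by auto
  have inX: "xs 0 \<in> X0 \<Longrightarrow> is_run T xs us n \<Longrightarrow> xs n \<in> X" for xs us n
    using sys x0 unfolding is_run_def by (cases n) auto
  assume h: "\<forall>(x, q) \<in> est_reach X X0 U T H \<delta>. \<not> q \<subseteq> XS"
  show "approx_cso X X0 XS T H \<delta>" unfolding approx_cso_def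
  proof (intro allI impI)
    fix n xs us assume a: "xs 0 \<in> X0 \<and> is_run T xs us n \<and> xs n \<in> XS"
    then have "(xs n, QQ X0 T H \<delta> xs n) \<in> est_reach X X0 U T H \<delta>" using run_reach[OF sys] by blast
    then obtain x' where "x' \<in> QQ X0 T H \<delta> xs n" "x' \<notin> XS" using h by blast
    then obtain xs' us' where b: "xs' 0 \<in> X0" "is_run T xs' us' n" "xs' n = x'"
      "\<forall>i\<le>n. dist (H (xs i)) (H (xs' i)) \<le> \<delta>" unfolding QQ_def by blast
    have "xs' n \<in> X" using inX b by blast
    then show "\<exists>xs' us'. xs' 0 \<in> X0 \<and> is_run T xs' us' n \<and> xs' n \<in> X - XS \<and>
           (\<forall>i\<le>n. dist (H (xs i)) (H (xs' i)) \<le> \<delta>)"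
      using b \<open>x' \<notin> XS\<close> by blast
  qed
qed

end
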